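(* Let $G$ be a graph decomposable into $G_1$ and $G_2$. Then $G$ is double-critical if and only if $G_1$ and $G_2$ are both double-critical.
   Context: All graphs are finite and simple. A graph $G$ is decomposable (into $G_1$ and $G_2$) if it consists of two disjoint non-empty graphs $G_1$ and $G_2$ together with all edges joining a vertex of $G_1$ and a vertex of $G_2$. A graph $G$ is (vertex-)critical if $\chi(G-v)<\chi(G)$ for every vertex $v$; a critical graph is double-critical if $\chi(G-x-y)\le\chi(G)-2$ for every edge $xy\in E(G)$. *)

theory Defs
  imports Main
begin

type_synonym 'a graph = "'a set \<times> 'a set set"

definition verts :: "'a graph \<Rightarrow> 'a set" where "verts G = fst G"
definition edges :: "'a graph \<Rightarrow> 'a set set" where "edges G = snd G"

definition simple_graph :: "'a graph \<Rightarrow> bool" where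
  "simple_graph G \<longleftrightarrow> finite (verts G) \<and>
     (\<forall>e\<in>edges G. e \<subseteq> verts G \<and> card e = 2)"

definition colouring :: "'a graph \<Rightarrow> nat \<Rightarrow> ('a \<Rightarrow> nat) \<Rightarrow> bool" where
  "colouring G k f \<longleftrightarrow> (\<forall>v\<in>verts G. f v < k) \<and>
     (\<forall>x y. {x, y} \<in> edges G \<longrightarrow> x \<noteq> y \<longrightarrow> f x \<noteq> f y)"

definition chi :: "'a graph \<Rightarrow> nat" where
  "chi G = (LEAST k. \<exists>f. colouring G k f)"

definition del_verts :: "'a graph \<Rightarrow> 'a set \<Rightarrow> 'a graph" where
  "del_verts G S = (verts G - S, {e\<in>edges G. e \<inter> S = {}})"

definition critical :: "'a graph \<Rightarrow> bool" where
  "critical G \<longleftrightarrow> (\<forall>v\<in>verts G. chi (del_verts G {v}) < chi G)"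

definition double_critical :: "'a graph \<Rightarrow> bool" where
  "double_critical G \<longleftrightarrow> critical G \<and>
     (\<forall>x y. {x, y} \<in> edges G \<longrightarrow> x \<noteq> y \<longrightarrow> chi (del_verts G {x, y}) \<le> chi G - 2)"

definition decomposable_into :: "'a graph \<Rightarrow> 'a graph \<Rightarrow> 'a graph \<Rightarrow> bool" where
  "decomposable_into G G1 G2 \<longleftrightarrow>
     simple_graph G1 \<and> simple_graph G2 \<and>
     verts G1 \<noteq> {} \<and> verts G2 \<noteq> {} \<and> verts G1 \<inter> verts G2 = {} \<and>
     verts G = verts G1 \<union> verts G2 \<and>
     edges G = edges G1 \<union> edges G2 \<union> {{x, y} | x y. x \<in> verts G1 \<and> y \<in> verts G2}"

end

theory Submission
  imports Defs
begin

lemma verts_del[simp]: "verts (del_verts G S) = verts G - S"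
  by (simp add: del_verts_def verts_def)
lemma edges_del[simp]: "edges (del_verts G S) = {e\<in>edges G. e \<inter> S = {}}"
  by (simp add: del_verts_def edges_def)

lemma simple_del: "simple_graph G \<Longrightarrow> simple_graph (del_verts G S)"
  unfolding simple_graph_def by auto

lemma edge_in: "simple_graph G \<Longrightarrow> {x,y} \<in> edges G \<Longrightarrow> x \<in> verts G \<and> y \<in> verts G"
  unfolding simple_graph_def by auto

lemma del_inter: "simple_graph G \<Longrightarrow> del_verts G S = del_verts G (S \<inter> verts G)"
  unfolding simple_graph_def del_verts_def verts_def edges_def by auto

lemma del_empty: "del_verts G {} = G"
  unfolding del_verts_def verts_def edges_def by (cases G) auto

lemma chi_exists: "simple_graph G \<Longrightarrow> \<exists>k f. colouring G k f"
proof -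
  assume s: "simple_graph G"
  then have "finite (verts G)" by (simp add: simple_graph_def)
  then obtain f n where f: "f ` verts G = {i::nat. i < n}" "inj_on f (verts G)"
    using finite_imp_inj_to_nat_seg by blast
  have "colouring G n f"
    unfolding colouring_def
  proof (intro conjI allI impI ballI)
    fix v assume "v \<in> verts G" then show "f v < n" using f by blast
  next
    fix x y assume "{x,y} \<in> edges G" "x \<noteq> y"
    then show "f x \<noteq> f y" using edge_in[OF s] f(2) by (metis inj_on_contraD)
  qed
  then show ?thesis by blast
qed

lemma chi_colouring: "simple_graph G \<Longrightarrow> \<exists>f. colouring G (chi G) f"
proof -
  assume "simple_graph G"
  then obtain k f where "colouring G k f" using chi_exists by blast
  then have "\<exists>f. colouring G k f" by blast
  then show ?thesis unfolding chi_def by (rule LeastI)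
qed

lemma chi_le: "colouring G k f \<Longrightarrow> chi G \<le> k"
  unfolding chi_def by (metis (mono_tags, lifting) Least_le)

lemma chi_ge1: "simple_graph G \<Longrightarrow> v \<in> verts G \<Longrightarrow> chi G \<ge> 1"
  using chi_colouring unfolding colouring_def by fastforce

lemma chi_ge2: "simple_graph G \<Longrightarrow> {x,y} \<in> edges G \<Longrightarrow> x \<noteq> y \<Longrightarrow> chi G \<ge> 2"
proof -
  assume s: "simple_graph G" and e: "{x,y} \<in> edges G" and d: "x \<noteq> y"
  obtain f where f: "colouring G (chi G) f" using chi_colouring[OF s] by blast
  have "f x < chi G" "f y < chi G" "f x \<noteq> f y"
    using f edge_in[OF s e] e d unfolding colouring_def by auto
  then show ?thesis by linarith
qed

lemma recolour:
  assumes f: "colouring G k f" and V: "verts H \<subseteq> verts G" and E: "edges H \<subseteq> edges G"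
    and sH: "simple_graph H"
  shows "chi H \<le> card (f ` verts H)"
proof -
  have fin: "finite (f ` verts H)" using sH by (simp add: simple_graph_def)
  obtain g n where g: "g ` (f ` verts H) = {i::nat. i < n}" "inj_on g (f ` verts H)"
    using finite_imp_inj_to_nat_seg[OF fin] by blast
  have n: "card (f ` verts H) = n" using card_image[OF g(2)] g(1) by simp
  have "colouring H n (g \<circ> f)"
    unfolding colouring_def
  proof (intro conjI allI impI ballI)
    fix v assume "v \<in> verts H"
    then have "g (f v) \<in> g ` (f ` verts H)" by blast
    then show "(g \<circ> f) v < n" using g(1) by simp
  next
    fix x y assume e: "{x,y} \<in> edges H" "x \<noteq> y"
    have "{x,y} \<in> edges G" using e(1) E by (rule subsetD[rotated])
    then have "f x \<noteq> f y" using f e(2) unfolding colouring_def by blast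
    moreover have "x \<in> verts H" "y \<in> verts H" using edge_in[OF sH e(1)] by auto
    ultimately show "(g \<circ> f) x \<noteq> (g \<circ> f) y" using g(2) by (metis comp_apply imageI inj_on_eq_iff)
  qed
  then show ?thesis using chi_le n by simp
qed

definition join_of :: "'a graph \<Rightarrow> 'a graph \<Rightarrow> 'a graph \<Rightarrow> bool" where
  "join_of G G1 G2 \<longleftrightarrow> simple_graph G1 \<and> simple_graph G2 \<and> verts G1 \<inter> verts G2 = {} \<and>
     verts G = verts G1 \<union> verts G2 \<and>
     edges G = edges G1 \<union> edges G2 \<union> {{x, y} | x y. x \<in> verts G1 \<and> y \<in> verts G2}"

lemma join_del: "join_of G G1 G2 \<Longrightarrow> join_of (del_verts G S) (del_verts G1 S) (del_verts G2 S)"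
proof -
  assume j: "join_of G G1 G2"
  have c: "{{x, y} | x y. x \<in> verts G1 \<and> y \<in> verts G2} \<inter> {e. e \<inter> S = {}} =
     {{x, y} | x y. x \<in> verts G1 - S \<and> y \<in> verts G2 - S}" by blast
  have E: "edges G = edges G1 \<union> edges G2 \<union> {{x, y} | x y. x \<in> verts G1 \<and> y \<in> verts G2}"
    using j unfolding join_of_def by blast
  have "{e \<in> edges G. e \<inter> S = {}} = edges G \<inter> {e. e \<inter> S = {}}" by blast
  also have "\<dots> = {e \<in> edges G1. e \<inter> S = {}} \<union> {e \<in> edges G2. e \<inter> S = {}} \<union>
     {{x, y} | x y. x \<in> verts G1 - S \<and> y \<in> verts G2 - S}" unfolding E c[symmetric] by blast
  finally show ?thesis using j unfolding join_of_def by (auto simp: simple_del)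
qed

lemma join_chi: assumes j: "join_of G G1 G2" shows "chi G = chi G1 + chi G2"
proof -
  have s1: "simple_graph G1" and s2: "simple_graph G2" and dj: "verts G1 \<inter> verts G2 = {}"
    and V: "verts G = verts G1 \<union> verts G2"
    and E: "edges G = edges G1 \<union> edges G2 \<union> {{x, y} | x y. x \<in> verts G1 \<and> y \<in> verts G2}"
    using j unfolding join_of_def by auto
  obtain f1 where f1: "colouring G1 (chi G1) f1" using chi_colouring[OF s1] by blast
  obtain f2 where f2: "colouring G2 (chi G2) f2" using chi_colouring[OF s2] by blast
  define f where "f x = (if x \<in> verts G1 then f1 x else chi G1 + f2 x)" for x
  have "colouring G (chi G1 + chi G2) f"
    unfolding colouring_def
  proof (intro conjI allI impI ballI)
    fix v assume "v \<in> verts G" then show "f v < chi G1 + chi G2"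
      using f1 f2 V dj unfolding colouring_def f_def by auto
  next
    fix x y assume e: "{x,y} \<in> edges G" "x \<noteq> y"
    show "f x \<noteq> f y"
    proof (cases "{x,y} \<in> edges G1")
      case True
      then show ?thesis using edge_in[OF s1 True] f1 e(2) unfolding colouring_def f_def by auto
    next
      case F1: False
      show ?thesis
      proof (cases "{x,y} \<in> edges G2")
        case True
        then have "x \<notin> verts G1" "y \<notin> verts G1" using edge_in[OF s2 True] dj by auto
        then show ?thesis using True f2 e(2) unfolding colouring_def f_def by auto
      next
        case False
        then obtain a b where ab: "{x,y} = {a,b}" "a \<in> verts G1" "b \<in> verts G2"
          using e E F1 by auto
        have "b \<notin> verts G1" using ab dj by blast
        then have fb: "f b = chi G1 + f2 b" by (simp add: f_def)
        have "f a = f1 a" using ab by (simp add: f_def)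
        moreover have "f1 a < chi G1" using f1 ab(2) unfolding colouring_def by blast
        ultimately have "f a \<noteq> f b" using fb by simp
        moreover from ab(1) have "(x=a \<and> y=b) \<or> (x=b \<and> y=a)" by (simp add: doubleton_eq_iff)
        ultimately show ?thesis by auto
      qed
    qed
  qed
  then have le: "chi G \<le> chi G1 + chi G2" by (rule chi_le)
  have finG: "finite (verts G)" using s1 s2 V unfolding simple_graph_def by auto
  have "\<forall>e\<in>edges G. e \<subseteq> verts G \<and> card e = 2"
  proof
    fix e assume "e \<in> edges G"
    then consider "e \<in> edges G1" | "e \<in> edges G2" | a b where "e = {a,b}" "a \<in> verts G1" "b \<in> verts G2"
      using E by auto
    then show "e \<subseteq> verts G \<and> card e = 2"
    proof cases
      case 3 then have "a \<noteq> b" using dj by auto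
      then show ?thesis using 3 V by auto
    qed (use s1 s2 V in \<open>auto simp: simple_graph_def\<close>)
  qed
  then have sG: "simple_graph G" using finG by (simp add: simple_graph_def)
  obtain f where f: "colouring G (chi G) f" using chi_colouring[OF sG] by blast
  have h1: "chi G1 \<le> card (f ` verts G1)"
    by (rule recolour[OF f]) (use V E s1 in auto)
  have h2: "chi G2 \<le> card (f ` verts G2)"
    by (rule recolour[OF f]) (use V E s2 in auto)
  have dis: "f ` verts G1 \<inter> f ` verts G2 = {}"
  proof (rule ccontr)
    assume "f ` verts G1 \<inter> f ` verts G2 \<noteq> {}"
    then obtain a b where "a \<in> verts G1" "b \<in> verts G2" "f a = f b" by auto
    moreover have "{a,b} \<in> edges G" using E calculation by auto
    moreover have "a \<noteq> b" using calculation dj by auto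
    ultimately show False using f unfolding colouring_def by blast
  qed
  have sub: "f ` verts G1 \<union> f ` verts G2 \<subseteq> {..<chi G}" using f V unfolding colouring_def by auto
  have "card (f ` verts G1) + card (f ` verts G2) \<le> chi G"
    using card_mono[OF _ sub] card_Un_disjoint[OF _ _ dis] s1 s2 by (simp add: simple_graph_def)
  then show ?thesis using h1 h2 le by linarith
qed

lemma join_of_dec: "decomposable_into G G1 G2 \<Longrightarrow> join_of G G1 G2"
  unfolding decomposable_into_def join_of_def by blast

theorem proposition16:
  fixes G G1 G2 :: "'a graph"
  assumes "decomposable_into G G1 G2"
  shows "double_critical G \<longleftrightarrow> double_critical G1 \<and> double_critical G2"
proof -
  have j: "join_of G G1 G2" using join_of_dec[OF assms] .
  have s1: "simple_graph G1" and s2: "simple_graph G2" and dj: "verts G1 \<inter> verts G2 = {}"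
    and V: "verts G = verts G1 \<union> verts G2"
    and E: "edges G = edges G1 \<union> edges G2 \<union> {{x, y} | x y. x \<in> verts G1 \<and> y \<in> verts G2}"
    using assms unfolding decomposable_into_def by auto
  have cG: "chi G = chi G1 + chi G2" using join_chi[OF j] .
  have dS: "chi (del_verts G S) = chi (del_verts G1 (S \<inter> verts G1)) + chi (del_verts G2 (S \<inter> verts G2))" for S
    using join_chi[OF join_del[OF j, of S]] del_inter[OF s1, of S] del_inter[OF s2, of S] by simp
  have d1: "S \<subseteq> verts G1 \<Longrightarrow> chi (del_verts G S) = chi (del_verts G1 S) + chi G2" for S
  proof -
    assume "S \<subseteq> verts G1"
    then have "S \<inter> verts G1 = S" "S \<inter> verts G2 = {}" using dj by auto
    then show ?thesis using dS[of S] by (simp add: del_empty)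
  qed
  have d2: "S \<subseteq> verts G2 \<Longrightarrow> chi (del_verts G S) = chi G1 + chi (del_verts G2 S)" for S
  proof -
    assume "S \<subseteq> verts G2"
    then have "S \<inter> verts G2 = S" "S \<inter> verts G1 = {}" using dj by auto
    then show ?thesis using dS[of S] by (simp add: del_empty)
  qed
  have d12: "a \<in> verts G1 \<Longrightarrow> b \<in> verts G2 \<Longrightarrow>
      chi (del_verts G {a,b}) = chi (del_verts G1 {a}) + chi (del_verts G2 {b})" for a b
  proof -
    assume a: "a \<in> verts G1" and b: "b \<in> verts G2"
    then have "{a,b} \<inter> verts G1 = {a}" "{a,b} \<inter> verts G2 = {b}" using dj by auto
    then show ?thesis using dS[of "{a,b}"] by simp
  qed
  show ?thesis
  proof
    assume dc: "double_critical G"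
    have crit: "\<And>v. v \<in> verts G \<Longrightarrow> chi (del_verts G {v}) < chi G"
      and ed: "\<And>x y. {x, y} \<in> edges G \<Longrightarrow> x \<noteq> y \<Longrightarrow> chi (del_verts G {x, y}) \<le> chi G - 2"
      using dc unfolding double_critical_def critical_def by auto
    have "double_critical G1"
      unfolding double_critical_def critical_def
    proof (intro conjI ballI allI impI)
      fix v assume v: "v \<in> verts G1"
      then show "chi (del_verts G1 {v}) < chi G1" using crit[of v] d1[of "{v}"] V cG by auto
    next
      fix x y assume e: "{x,y} \<in> edges G1" "x \<noteq> y"
      then have "{x,y} \<subseteq> verts G1" using edge_in[OF s1] by auto
      then show "chi (del_verts G1 {x,y}) \<le> chi G1 - 2" using ed[of x y] e E d1[of "{x,y}"] cG by auto
    qed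
    moreover have "double_critical G2"
      unfolding double_critical_def critical_def
    proof (intro conjI ballI allI impI)
      fix v assume v: "v \<in> verts G2"
      then show "chi (del_verts G2 {v}) < chi G2" using crit[of v] d2[of "{v}"] V cG by auto
    next
      fix x y assume e: "{x,y} \<in> edges G2" "x \<noteq> y"
      then have "{x,y} \<subseteq> verts G2" using edge_in[OF s2] by auto
      then show "chi (del_verts G2 {x,y}) \<le> chi G2 - 2" using ed[of x y] e E d2[of "{x,y}"] cG by auto
    qed
    ultimately show "double_critical G1 \<and> double_critical G2" ..
  next
    assume "double_critical G1 \<and> double_critical G2"
    then have cr1: "\<And>v. v \<in> verts G1 \<Longrightarrow> chi (del_verts G1 {v}) < chi G1"
      and ed1: "\<And>x y. {x, y} \<in> edges G1 \<Longrightarrow> x \<noteq> y \<Longrightarrow> chi (del_verts G1 {x, y}) \<le> chi G1 - 2"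
      and cr2: "\<And>v. v \<in> verts G2 \<Longrightarrow> chi (del_verts G2 {v}) < chi G2"
      and ed2: "\<And>x y. {x, y} \<in> edges G2 \<Longrightarrow> x \<noteq> y \<Longrightarrow> chi (del_verts G2 {x, y}) \<le> chi G2 - 2"
      unfolding double_critical_def critical_def by auto
    show "double_critical G"
      unfolding double_critical_def critical_def
    proof (intro conjI ballI allI impI)
      fix v assume v: "v \<in> verts G"
      show "chi (del_verts G {v}) < chi G"
      proof (cases "v \<in> verts G1")
        case True then show ?thesis using cr1[of v] d1[of "{v}"] cG by auto
      next
        case False then have "v \<in> verts G2" using v V by auto
        then show ?thesis using cr2[of v] d2[of "{v}"] cG by auto
      qed
    next
      fix x y assume e: "{x,y} \<in> edges G" "x \<noteq> y"
      consider "{x,y} \<in> edges G1" | "{x,y} \<in> edges G2" | a b where "{x,y} = {a,b}" "a \<in> verts G1" "b \<in> verts G2"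
        using e E by auto
      then show "chi (del_verts G {x,y}) \<le> chi G - 2"
      proof cases
        case 1
        then have "{x,y} \<subseteq> verts G1" using edge_in[OF s1] by auto
        moreover have "chi G1 \<ge> 2" using chi_ge2[OF s1 1 e(2)] .
        ultimately show ?thesis using ed1[OF 1 e(2)] d1[of "{x,y}"] cG by auto
      next
        case 2
        then have "{x,y} \<subseteq> verts G2" using edge_in[OF s2] by auto
        moreover have "chi G2 \<ge> 2" using chi_ge2[OF s2 2 e(2)] .
        ultimately show ?thesis using ed2[OF 2 e(2)] d2[of "{x,y}"] cG by auto
      next
        case 3
        then show ?thesis using d12[of a b] cr1[of a] cr2[of b] cG by auto
      qed
    qed
  qed
qed

end
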